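(* Let $I=\{1,2\}$, $A=\{x,y\}$ with $x\ne y$, let $\mathcal C=\mathcal C(I,A,(\rho_i)_{i\in I},(C^a)_{a\in A})$ be a Cartan scheme with $\rho_1(x)=\rho_2(x)=y$ and $\rho_1(y)=\rho_2(y)=x$, and let $\mathcal R=\mathcal R(\mathcal C,(R^a)_{a\in A})$ be a root system of type $\mathcal C$. Then $\mathcal R$ is finite if and only if $\mathcal R$ is standard and $C^x=C^y$ is of finite type, that is, $c^x_{12}=c^x_{21}=0$ or $c^x_{12}c^x_{21}\in\{1,2,3\}$.
   Context: Let $\{\alpha_i\mid i\in I\}$ be the standard basis of $\mathbb Z^I$; $\mathbb N_0=\{0,1,2,\dots\}$. A generalized Cartan matrix is $C=(c_{ij})_{i,j\in I}\in\mathbb Z^{I\times I}$ with $c_{ii}=2$, $c_{jk}\le0$ for $j\ne k$, and $c_{ij}=0\Rightarrow c_{ji}=0$. A Cartan scheme $\mathcal C=\mathcal C(I,A,(\rho_i)_{i\in I},(C^a)_{a\in A})$ consists of a nonempty set $A$, maps $\rho_i:A\to A$ and generalized Cartan matrices $C^a=(c^a_{jk})_{j,k\in I}$ such that (C1) $\rho_i^2=\mathrm{id}$ and (C2) $c^a_{ij}=c^{\rho_i(a)}_{ij}$ for all $a\in A$, $i,j\in I$. It (and any root system of its type) is called standard if $C^a=C^b$ for all $a,b\in A$. For $i\in I$, $a\in A$ let $\sigma_i^a\in\mathrm{Aut}(\mathbb Z^I)$, $\sigma_i^a(\alpha_j)=\alpha_j-c^a_{ij}\alpha_i$. A root system of type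 $\mathcal C$ is a family $\mathcal R=\mathcal R(\mathcal C,(R^a)_{a\in A})$ of subsets $R^a\subset\mathbb Z^I$ such that, writing $R^a_+=R^a\cap\mathbb N_0^I$ and $m^a_{i,j}=|R^a\cap(\mathbb N_0\alpha_i+\mathbb N_0\alpha_j)|$, for all $a\in A$, $i,j\in I$: (R1) $R^a=R^a_+\cup(-R^a_+)$; (R2) $R^a\cap\mathbb Z\alpha_i=\{\alpha_i,-\alpha_i\}$; (R3) $\sigma_i^a(R^a)=R^{\rho_i(a)}$; (R4) if $i\neq j$ and $m^a_{i,j}$ is finite then $(\rho_i\rho_j)^{m^a_{i,j}}(a)=a$. It is finite if every $R^a$ is finite. *)

theory Defs
  imports Main
begin

text \<open>Elements of Z^I are modelled as functions 'i => int vanishing outside I.\<close>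

definition zvec :: "'i set \<Rightarrow> ('i \<Rightarrow> int) set" where
  "zvec I = {v. \<forall>j. j \<notin> I \<longrightarrow> v j = 0}"

definition alpha :: "'i \<Rightarrow> 'i \<Rightarrow> int" where
  "alpha i = (\<lambda>j. if j = i then 1 else 0)"

definition gen_cartan_matrix :: "'i set \<Rightarrow> ('i \<Rightarrow> 'i \<Rightarrow> int) \<Rightarrow> bool" where
  "gen_cartan_matrix I c \<longleftrightarrow>
     (\<forall>i\<in>I. c i i = 2) \<and>
     (\<forall>j\<in>I. \<forall>k\<in>I. j \<noteq> k \<longrightarrow> c j k \<le> 0) \<and>
     (\<forall>i\<in>I. \<forall>j\<in>I. c i j = 0 \<longrightarrow> c j i = 0)"

definition cartan_scheme ::
  "'i set \<Rightarrow> 'a set \<Rightarrow> ('i \<Rightarrow> 'a \<Rightarrow> 'a) \<Rightarrow> ('a \<Rightarrow> 'i \<Rightarrow> 'i \<Rightarrow> int) \<Rightarrow> bool" where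
  "cartan_scheme I A rho C \<longleftrightarrow>
     A \<noteq> {} \<and>
     (\<forall>i\<in>I. \<forall>a\<in>A. rho i a \<in> A) \<and>
     (\<forall>i\<in>I. \<forall>a\<in>A. rho i (rho i a) = a) \<and>
     (\<forall>a\<in>A. gen_cartan_matrix I (C a)) \<and>
     (\<forall>a\<in>A. \<forall>i\<in>I. \<forall>j\<in>I. C a i j = C (rho i a) i j)"

text \<open>sigma_i^a(v) = v - (sum_j c^a_ij v_j) alpha_i, the linear map with
  sigma_i^a(alpha_j) = alpha_j - c^a_ij alpha_i.\<close>
definition sigma ::
  "'i set \<Rightarrow> ('a \<Rightarrow> 'i \<Rightarrow> 'i \<Rightarrow> int) \<Rightarrow> 'a \<Rightarrow> 'i \<Rightarrow> ('i \<Rightarrow> int) \<Rightarrow> ('i \<Rightarrow> int)" where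
  "sigma I C a i v = (\<lambda>k. v k - (if k = i then (\<Sum>j\<in>I. C a i j * v j) else 0))"

definition pos_roots :: "'i set \<Rightarrow> ('i \<Rightarrow> int) set \<Rightarrow> ('i \<Rightarrow> int) set" where
  "pos_roots I S = S \<inter> {v \<in> zvec I. \<forall>j. 0 \<le> v j}"

definition root_system ::
  "'i set \<Rightarrow> 'a set \<Rightarrow> ('i \<Rightarrow> 'a \<Rightarrow> 'a) \<Rightarrow> ('a \<Rightarrow> 'i \<Rightarrow> 'i \<Rightarrow> int)
     \<Rightarrow> ('a \<Rightarrow> ('i \<Rightarrow> int) set) \<Rightarrow> bool" where
  "root_system I A rho C R \<longleftrightarrow>
     cartan_scheme I A rho C \<and>
     (\<forall>a\<in>A. R a \<subseteq> zvec I) \<and>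
     (\<forall>a\<in>A. R a = pos_roots I (R a) \<union> uminus ` pos_roots I (R a)) \<and>
     (\<forall>a\<in>A. \<forall>i\<in>I. R a \<inter> {(\<lambda>j. k * alpha i j) | k :: int. True} = {alpha i, - alpha i}) \<and>
     (\<forall>a\<in>A. \<forall>i\<in>I. sigma I C a i ` R a = R (rho i a)) \<and>
     (\<forall>a\<in>A. \<forall>i\<in>I. \<forall>j\<in>I. i \<noteq> j \<longrightarrow>
        (let S = R a \<inter> {(\<lambda>k. n * alpha i k + m * alpha j k) | n m :: int. 0 \<le> n \<and> 0 \<le> m}
         in finite S \<longrightarrow> ((rho i \<circ> rho j) ^^ card S) a = a))"

definition finite_root_system :: "'a set \<Rightarrow> ('a \<Rightarrow> ('i \<Rightarrow> int) set) \<Rightarrow> bool" where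
  "finite_root_system A R \<longleftrightarrow> (\<forall>a\<in>A. finite (R a))"

definition standard_scheme :: "'i set \<Rightarrow> 'a set \<Rightarrow> ('a \<Rightarrow> 'i \<Rightarrow> 'i \<Rightarrow> int) \<Rightarrow> bool" where
  "standard_scheme I A C \<longleftrightarrow> (\<forall>a\<in>A. \<forall>b\<in>A. \<forall>i\<in>I. \<forall>j\<in>I. C a i j = C b i j)"

end

theory Submission imports Defs begin

definition sg :: "(nat \<Rightarrow> nat \<Rightarrow> int) \<Rightarrow> nat \<Rightarrow> (nat \<Rightarrow> int) \<Rightarrow> (nat \<Rightarrow> int)" where
  "sg c i v = (\<lambda>k. v k - (if k = i then c i 1 * v 1 + c i 2 * v 2 else 0))"

fun ap :: "(nat \<Rightarrow> nat \<Rightarrow> int) \<Rightarrow> nat list \<Rightarrow> (nat \<Rightarrow> int) \<Rightarrow> (nat \<Rightarrow> int)" where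
  "ap c [] v = v"
| "ap c (i # w) v = ap c w (sg c i v)"

fun Re :: "(nat \<Rightarrow> nat \<Rightarrow> int) \<Rightarrow> nat list \<Rightarrow> (nat \<Rightarrow> int) set" where
  "Re c [] = {}"
| "Re c (i # w) = insert (alpha i) (sg c i ` Re c w)"

definition spair :: "(nat \<Rightarrow> nat \<Rightarrow> int) \<Rightarrow> nat \<Rightarrow> int \<times> int \<Rightarrow> int \<times> int" where
  "spair c i pq = (if i = 1 then (fst pq - (c 1 1 * fst pq + c 1 2 * snd pq), snd pq)
                   else (fst pq, snd pq - (c 2 1 * fst pq + c 2 2 * snd pq)))"

fun apair :: "(nat \<Rightarrow> nat \<Rightarrow> int) \<Rightarrow> nat list \<Rightarrow> int \<times> int \<Rightarrow> int \<times> int" where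
  "apair c [] pq = pq"
| "apair c (i # w) pq = apair c w (spair c i pq)"

lemma sigma_sg: "sigma {1,2} C a i = sg (C a) i"
  by (simp add: fun_eq_iff sigma_def sg_def)

lemma sg_invol: "c i i = 2 \<Longrightarrow> i \<in> {1,2} \<Longrightarrow> sg c i (sg c i v) = v"
  by (rule ext) (auto simp: sg_def algebra_simps)

lemma ap_pair: "set w \<subseteq> {1,2} \<Longrightarrow> (ap c w v 1, ap c w v 2) = apair c w (v 1, v 2)"
proof (induction w arbitrary: v)
  case Nil then show ?case by simp
next
  case (Cons i w)
  have "(sg c i v 1, sg c i v 2) = spair c i (v 1, v 2)"
    using Cons.prems by (auto simp: sg_def spair_def)
  then show ?case using Cons by simp
qed

lemma finite_Re: "finite (Re c w)"
  by (induction w) auto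

locale rs2 =
  fixes c :: "nat \<Rightarrow> nat \<Rightarrow> int" and U :: "(nat \<Rightarrow> int) set"
  assumes c11: "c 1 1 = 2" and c22: "c 2 2 = 2"
  and inv: "\<And>i v. i \<in> {1,2} \<Longrightarrow> v \<in> U \<Longrightarrow> sg c i v \<in> U"
  and sign: "\<And>v. v \<in> U \<Longrightarrow> (\<forall>j. 0 \<le> v j) \<or> (\<forall>j. v j \<le> 0)"
  and zv: "\<And>v. v \<in> U \<Longrightarrow> v \<in> zvec {1,2}"
  and r2: "\<And>i v k. i \<in> {1,2} \<Longrightarrow> v \<in> U \<Longrightarrow> v = (\<lambda>j. k * alpha i j) \<Longrightarrow> v = alpha i \<or> v = - alpha i"
  and neg: "\<And>v. v \<in> U \<Longrightarrow> - v \<in> U"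
  and simple: "alpha 1 \<in> U"
begin

lemma zero_notin: "(\<lambda>_. 0::int) \<notin> U"
proof
  assume z: "(\<lambda>_. 0::int) \<in> U"
  have e: "(\<lambda>_. 0::int) = (\<lambda>j. 0 * alpha 1 j)" by simp
  have "(\<lambda>_. 0::int) = alpha (1::nat) \<or> (\<lambda>_. 0::int) = - alpha (1::nat)" using r2[OF _ z e] by simp
  then have "(0::int) = alpha (1::nat) 1 \<or> (0::int) = (- alpha (1::nat)) 1" by metis
  then show False by (simp add: alpha_def)
qed

lemma step:
  assumes i: "i \<in> {1,2}" and b: "\<beta> \<in> U" "\<forall>j. 0 \<le> \<beta> j" "\<beta> \<noteq> alpha i"
  shows "\<forall>j. 0 \<le> sg c i \<beta> j"
proof -
  define j where "j = (3::nat) - i"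
  have j: "j \<in> {1,2}" "j \<noteq> i" "sg c i \<beta> j = \<beta> j" using i by (auto simp: j_def sg_def)
  have "\<beta> j \<noteq> 0"
  proof
    assume z: "\<beta> j = 0"
    have "\<beta> = (\<lambda>k. \<beta> i * alpha i k)"
    proof
      fix k
      show "\<beta> k = \<beta> i * alpha i k"
        using zv[OF b(1)] z i j by (cases "k = i"; cases "k = j") (auto simp: zvec_def alpha_def)
    qed
    from r2[OF i b(1) this] b(3) have "\<beta> = - alpha i" by simp
    then have "\<beta> i = -1" by (simp add: alpha_def)
    moreover have "0 \<le> \<beta> i" using b(2) by blast
    ultimately show False by simp
  qed
  with b(2) have pos: "\<beta> j > 0" by (metis order_le_less)
  have "sg c i \<beta> \<in> U" using inv[OF i b(1)] .
  from sign[OF this] pos j(3) show ?thesis by (metis not_le)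
qed

lemma chain: "set w \<subseteq> {1,2} \<Longrightarrow> \<beta> \<in> U \<Longrightarrow> \<forall>j. 0 \<le> \<beta> j \<Longrightarrow> \<beta> \<in> Re c w \<or> (\<forall>j. 0 \<le> ap c w \<beta> j)"
proof (induction w arbitrary: \<beta>)
  case Nil then show ?case by simp
next
  case (Cons i w)
  have i: "i \<in> {1,2}" using Cons.prems by simp
  show ?case
  proof (cases "\<beta> = alpha i")
    case True then show ?thesis by simp
  next
    case False
    have u: "sg c i \<beta> \<in> U" using inv[OF i Cons.prems(2)] .
    have p: "\<forall>j. 0 \<le> sg c i \<beta> j" using step[OF i Cons.prems(2,3) False] .
    have cii: "c i i = 2" using i c11 c22 by auto
    from Cons.IH[OF _ u p] Cons.prems(1)
    have "sg c i \<beta> \<in> Re c w \<or> (\<forall>j. 0 \<le> ap c w (sg c i \<beta>) j)" by simp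
    then show ?thesis
    proof
      assume "sg c i \<beta> \<in> Re c w"
      then have "sg c i (sg c i \<beta>) \<in> sg c i ` Re c w" by blast
      then show ?thesis using sg_invol[of c i, OF cii i] by simp
    qed simp
  qed
qed

lemma fin:
  assumes w: "set w \<subseteq> {1,2}"
    and h: "\<And>p q. 0 \<le> p \<Longrightarrow> 0 \<le> q \<Longrightarrow> (p,q) \<noteq> (0,0) \<Longrightarrow>
               \<not> (0 \<le> fst (apair c w (p,q)) \<and> 0 \<le> snd (apair c w (p,q)))"
  shows "finite U"
proof -
  have pos: "v \<in> Re c w" if v: "v \<in> U" "\<forall>j. 0 \<le> v j" for v
  proof -
    have "(v 1, v 2) \<noteq> (0,0)"
    proof
      assume "(v 1, v 2) = (0,0)"
      then have v12: "v 1 = 0" "v 2 = 0" by auto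
      have "v = (\<lambda>_. 0)"
      proof
        fix k show "v k = 0"
          using zv[OF v(1)] v12 by (cases "k = 1"; cases "k = 2") (auto simp: zvec_def)
      qed
      with v(1) zero_notin show False by simp
    qed
    moreover have "\<not> (\<forall>j. 0 \<le> ap c w v j)"
    proof
      assume "\<forall>j. 0 \<le> ap c w v j"
      then have "0 \<le> ap c w v 1" "0 \<le> ap c w v 2" by auto
      with ap_pair[OF w, of c v] h[of "v 1" "v 2"] v(2) \<open>(v 1, v 2) \<noteq> (0,0)\<close>
      show False by (metis fst_conv snd_conv)
    qed
    ultimately show ?thesis using chain[OF w v] by blast
  qed
  have "U \<subseteq> Re c w \<union> uminus ` Re c w"
  proof
    fix v assume v: "v \<in> U"
    from sign[OF v] show "v \<in> Re c w \<union> uminus ` Re c w"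
    proof
      assume "\<forall>j. 0 \<le> v j" then show ?thesis using pos v by blast
    next
      assume "\<forall>j. v j \<le> 0"
      then have "\<forall>j. 0 \<le> (- v) j" by simp
      then have "- v \<in> Re c w" using pos neg[OF v] by blast
      then have "- (- v) \<in> uminus ` Re c w" by blast
      moreover have "- (- v) = v" by (simp add: fun_eq_iff)
      ultimately show ?thesis by simp
    qed
  qed
  then show ?thesis using finite_Re by (meson finite_UnI finite_imageI finite_subset)
qed

lemma infin:
  assumes a: "c 1 2 < 0" and b: "c 2 1 < 0" and ab: "c 1 2 * c 2 1 \<ge> 4"
  shows "infinite U"
proof
  assume finU: "finite U"
  define g where "g = sg c 1 \<circ> sg c 2"
  define f where "f n = (g ^^ n) (alpha 1)" for n
  have fS: "f (Suc n) = g (f n)" for n by (simp add: f_def)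
  have fU: "f n \<in> U" for n
  proof (induction n)
    case 0 have "f 0 = alpha 1" by (simp add: f_def)
    then show ?case using simple by simp
  next
    case (Suc n) then show ?case by (simp add: inv fS g_def)
  qed
  define A where "A = - c 1 2"
  define B where "B = - c 2 1"
  have A: "A \<ge> 1" and B: "B \<ge> 1" and AB: "A * B \<ge> 4" using a b ab by (auto simp: A_def B_def)
  have g1: "g v 1 = A * (B * v 1 - v 2) - v 1" and g2: "g v 2 = B * v 1 - v 2" for v
    using c11 c22 by (auto simp: g_def sg_def A_def B_def algebra_simps)
  have key: "P p q \<Longrightarrow> P (A * (B * p - q) - p) (B * p - q) \<and> A * (B * p - q) - p > p"
    if "P = (\<lambda>p q. p > 0 \<and> q \<ge> 0 \<and> B * p > 2 * q)" for P p q
  proof -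
    assume "P p q"
    then have p: "p > 0" "q \<ge> 0" "B * p > 2 * q" using that by auto
    define q' where "q' = B * p - q"
    have h1: "A * (2 * q) < A * (B * p)" using p(3) A by simp
    have h2: "4 * p \<le> (A * B) * p" using AB p(1) by simp
    have e1: "A * q' = A * B * p - A * q" by (simp add: q'_def algebra_simps)
    have s1: "A * q' > 2 * p" using h1 h2 e1 by (simp only: algebra_simps; linarith)
    have h3: "B * (2 * p) < B * (A * q')" using s1 B by simp
    have q0: "q' \<ge> 0" using p by (simp add: q'_def)
    have h4: "4 * q' \<le> (A * B) * q'" using AB q0 by (rule mult_right_mono)
    have "B * (A * q' - p) > 2 * q'" using h3 h4 by (simp only: algebra_simps; linarith)
    then show ?thesis using that p s1 q0 by (simp add: q'_def[symmetric])
  qed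
  define P where "P = (\<lambda>p q. p > 0 \<and> q \<ge> 0 \<and> B * (p::int) > 2 * q)"
  have inv: "P (f n 1) (f n 2)" for n
  proof (induction n)
    case 0 then show ?case using B by (simp add: P_def f_def alpha_def)
  next
    case (Suc n)
    from key[OF P_def Suc] show ?case unfolding fS g1 g2 by blast
  qed
  have "f n 1 < f (Suc n) 1" for n
    using key[OF P_def inv[of n]] unfolding fS g1 g2 by blast
  then have "strict_mono (\<lambda>n. f n 1)" by (simp add: strict_mono_Suc_iff)
  then have "inj (\<lambda>n. f n 1)" by (rule strict_mono_imp_inj_on)
  then have "inj f" by (auto simp: inj_def)
  then have "infinite (range f)" using finite_imageD infinite_UNIV_nat by blast
  moreover have "range f \<subseteq> U" using fU by auto
  ultimately show False using finU finite_subset by blast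
qed

end

lemma word_h:
  assumes "c 1 1 = 2" "c 2 2 = 2" "0 \<le> p" "0 \<le> q" "(p,q) \<noteq> (0,0)"
  shows "c 1 2 = 0 \<Longrightarrow> c 2 1 = 0 \<Longrightarrow> \<not> (0 \<le> fst (apair c [1,2] (p,q)) \<and> 0 \<le> snd (apair c [1,2] (p,q)))"
    and "c 1 2 = -1 \<Longrightarrow> c 2 1 = -1 \<Longrightarrow> \<not> (0 \<le> fst (apair c [1,2,1] (p,q)) \<and> 0 \<le> snd (apair c [1,2,1] (p,q)))"
    and "c 1 2 = -1 \<Longrightarrow> c 2 1 = -2 \<Longrightarrow> \<not> (0 \<le> fst (apair c [1,2,1,2] (p,q)) \<and> 0 \<le> snd (apair c [1,2,1,2] (p,q)))"
    and "c 1 2 = -2 \<Longrightarrow> c 2 1 = -1 \<Longrightarrow> \<not> (0 \<le> fst (apair c [1,2,1,2] (p,q)) \<and> 0 \<le> snd (apair c [1,2,1,2] (p,q)))"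
    and "c 1 2 = -1 \<Longrightarrow> c 2 1 = -3 \<Longrightarrow> \<not> (0 \<le> fst (apair c [1,2,1,2,1,2] (p,q)) \<and> 0 \<le> snd (apair c [1,2,1,2,1,2] (p,q)))"
    and "c 1 2 = -3 \<Longrightarrow> c 2 1 = -1 \<Longrightarrow> \<not> (0 \<le> fst (apair c [1,2,1,2,1,2] (p,q)) \<and> 0 \<le> snd (apair c [1,2,1,2,1,2] (p,q)))"
  using assms by (simp_all add: spair_def algebra_simps; linarith)+


theorem proposition5p2:
  fixes x y :: 'a
    and rho :: "nat \<Rightarrow> 'a \<Rightarrow> 'a"
    and C :: "'a \<Rightarrow> nat \<Rightarrow> nat \<Rightarrow> int"
    and R :: "'a \<Rightarrow> (nat \<Rightarrow> int) set"
  assumes "x \<noteq> y"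
    and "cartan_scheme {1, 2} {x, y} rho C"
    and "rho 1 x = y" and "rho 2 x = y" and "rho 1 y = x" and "rho 2 y = x"
    and "root_system {1, 2} {x, y} rho C R"
  shows "finite_root_system {x, y} R \<longleftrightarrow>
           standard_scheme {1, 2} {x, y} C \<and>
           ((C x 1 2 = 0 \<and> C x 2 1 = 0) \<or> C x 1 2 * C x 2 1 \<in> {1, 2, 3})"
proof -
  note cs = assms(2)[unfolded cartan_scheme_def]
  note rs = assms(7)[unfolded root_system_def]
  note rsZ = rs[THEN conjunct2, THEN conjunct1]
  note rs1 = rs[THEN conjunct2, THEN conjunct2, THEN conjunct1]
  note rs2 = rs[THEN conjunct2, THEN conjunct2, THEN conjunct2, THEN conjunct1]
  note rs3 = rs[THEN conjunct2, THEN conjunct2, THEN conjunct2, THEN conjunct2, THEN conjunct1]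
  have gcm: "gen_cartan_matrix {1,2} (C x)" using cs by simp
  then have c11: "C x 1 1 = 2" and c22: "C x 2 2 = 2" and c12: "C x 1 2 \<le> 0" and c21: "C x 2 1 \<le> 0"
    and z12: "C x 1 2 = 0 \<Longrightarrow> C x 2 1 = 0" and z21: "C x 2 1 = 0 \<Longrightarrow> C x 1 2 = 0"
    unfolding gen_cartan_matrix_def by auto
  have cy: "C y i j = C x i j" if "i \<in> {1,2}" "j \<in> {1,2}" for i j
  proof -
    have "C x i j = C (rho i x) i j" using cs that by blast
    moreover have "rho i x = y" using that assms(3,4) by auto
    ultimately show ?thesis by simp
  qed
  have std: "standard_scheme {1, 2} {x, y} C"
    unfolding standard_scheme_def using cy by auto
  have sgy: "sg (C y) i = sg (C x) i" if "i \<in> {1,2}" for i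
    using cy[OF that] by (simp add: sg_def fun_eq_iff)
  have sig: "sigma {1,2} C a i = sg (C x) i" if "a \<in> {x,y}" "i \<in> {1,2}" for a i
  proof -
    have "sigma {1,2} C a i = sg (C a) i" by (rule sigma_sg)
    moreover have "sg (C a) i = sg (C x) i" using that sgy by auto
    ultimately show ?thesis by simp
  qed
  define U where "U = R x \<union> R y"
  have R3: "sg (C x) i ` R a = R (rho i a)" if "a \<in> {x,y}" "i \<in> {1,2}" for a i
    using rs3 that sig[OF that] by metis
  have rhoxy: "rho i x = y" "rho i y = x" if "i \<in> {1,2}" for i
    using that assms(3-6) by auto
  have inv: "sg (C x) i v \<in> U" if "i \<in> {1,2}" "v \<in> U" for i v
  proof -
    have "sg (C x) i ` R x = R y" "sg (C x) i ` R y = R x"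
      using R3[of x i] R3[of y i] rhoxy[OF that(1)] that(1) by auto
    then show ?thesis using that(2) unfolding U_def by blast
  qed
  have R1: "R a = pos_roots {1,2} (R a) \<union> uminus ` pos_roots {1,2} (R a)" if "a \<in> {x,y}" for a
    using rs1 that by blast
  have sign: "(\<forall>j. 0 \<le> v j) \<or> (\<forall>j. v j \<le> 0)" if vU: "v \<in> U" for v
  proof -
    obtain a where a: "a \<in> {x,y}" "v \<in> R a" using vU U_def by auto
    then have "v \<in> pos_roots {1,2} (R a) \<union> uminus ` pos_roots {1,2} (R a)" using R1 by blast
    then show ?thesis by (auto simp: pos_roots_def)
  qed
  have neg: "- v \<in> U" if vU: "v \<in> U" for v
  proof -
    obtain a where a: "a \<in> {x,y}" "v \<in> R a" using vU U_def by auto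
    then have "v \<in> pos_roots {1,2} (R a) \<union> uminus ` pos_roots {1,2} (R a)" using R1 by blast
    then have "- v \<in> R a"
    proof
      assume "v \<in> pos_roots {1,2} (R a)"
      then have "- v \<in> uminus ` pos_roots {1,2} (R a)" by blast
      then show ?thesis using R1[OF a(1)] by blast
    next
      assume "v \<in> uminus ` pos_roots {1,2} (R a)"
      then obtain w where "w \<in> pos_roots {1,2} (R a)" "v = - w" by blast
      moreover have "- (- w) = w" by (simp add: fun_eq_iff)
      ultimately show ?thesis by (simp add: pos_roots_def)
    qed
    then show ?thesis using a unfolding U_def by auto
  qed
  have zv: "v \<in> zvec {1,2}" if "v \<in> U" for v
    using rsZ that unfolding U_def by blast
  have R2: "R a \<inter> {(\<lambda>j. k * alpha i j) | k :: int. True} = {alpha i, - alpha i}" if "a \<in> {x,y}" "i \<in> {1,2}" for a i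
    using rs2 that by blast
  have r2: "v = alpha i \<or> v = - alpha i" if th: "i \<in> {1,2}" "v \<in> U" "v = (\<lambda>j. k * alpha i j)" for i v k
  proof -
    note that = th
    obtain a where a: "a \<in> {x,y}" "v \<in> R a" using th U_def by auto
    then have "v \<in> R a \<inter> {(\<lambda>j. k * alpha i j) | k :: int. True}" using that(3) by blast
    then show ?thesis using R2[OF a(1) that(1)] by blast
  qed
  have simple: "alpha 1 \<in> U"
    using R2[of x 1] unfolding U_def by blast
  interpret rs2 "C x" U
    using c11 c22 inv sign zv r2 neg simple by unfold_locales auto
  have finiff: "finite_root_system {x, y} R \<longleftrightarrow> finite U"
    unfolding finite_root_system_def U_def by simp
  show ?thesis
  proof (cases "(C x 1 2 = 0 \<and> C x 2 1 = 0) \<or> C x 1 2 * C x 2 1 \<in> {1, 2, 3}")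
    case True
    have cases: "(C x 1 2 = 0 \<and> C x 2 1 = 0) \<or> (C x 1 2 = -1 \<and> C x 2 1 = -1) \<or>
        (C x 1 2 = -1 \<and> C x 2 1 = -2) \<or> (C x 1 2 = -2 \<and> C x 2 1 = -1) \<or>
        (C x 1 2 = -1 \<and> C x 2 1 = -3) \<or> (C x 1 2 = -3 \<and> C x 2 1 = -1)"
    proof (cases "C x 1 2 = 0 \<and> C x 2 1 = 0")
      case False
      with True have p: "C x 1 2 * C x 2 1 \<in> {1,2,3}" by blast
      have n1: "C x 1 2 \<noteq> 0" "C x 2 1 \<noteq> 0" using p by auto
      have l1: "C x 1 2 * C x 2 1 \<ge> - C x 1 2"
      proof -
        have "C x 1 2 * C x 2 1 \<ge> C x 1 2 * (-1)" using c12 c21 n1 by (intro mult_left_mono_neg) auto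
        then show ?thesis by simp
      qed
      have l2: "C x 1 2 * C x 2 1 \<ge> - C x 2 1"
      proof -
        have "C x 2 1 * C x 1 2 \<ge> C x 2 1 * (-1)" using c12 c21 n1 by (intro mult_left_mono_neg) auto
        then show ?thesis by (simp add: mult.commute)
      qed
      have "C x 1 2 \<in> {-1,-2,-3}" "C x 2 1 \<in> {-1,-2,-3}" using l1 l2 p c12 c21 n1 by auto
      then show ?thesis using p by auto
    qed simp
    have "finite U"
      using cases
    proof (elim disjE conjE)
      assume h: "C x 1 2 = 0" "C x 2 1 = 0"
      show "finite U" by (rule fin[of "[1,2]"]) (use word_h(1)[OF c11 c22 _ _ _ h] in auto)
    next
      assume h: "C x 1 2 = -1" "C x 2 1 = -1"
      show "finite U" by (rule fin[of "[1,2,1]"]) (use word_h(2)[OF c11 c22 _ _ _ h] in auto)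
    next
      assume h: "C x 1 2 = -1" "C x 2 1 = -2"
      show "finite U" by (rule fin[of "[1,2,1,2]"]) (use word_h(3)[OF c11 c22 _ _ _ h] in auto)
    next
      assume h: "C x 1 2 = -2" "C x 2 1 = -1"
      show "finite U" by (rule fin[of "[1,2,1,2]"]) (use word_h(4)[OF c11 c22 _ _ _ h] in auto)
    next
      assume h: "C x 1 2 = -1" "C x 2 1 = -3"
      show "finite U" by (rule fin[of "[1,2,1,2,1,2]"]) (use word_h(5)[OF c11 c22 _ _ _ h] in auto)
    next
      assume h: "C x 1 2 = -3" "C x 2 1 = -1"
      show "finite U" by (rule fin[of "[1,2,1,2,1,2]"]) (use word_h(6)[OF c11 c22 _ _ _ h] in auto)
    qed
    then show ?thesis using finiff std True by simp
  next
    case False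
    have n1: "C x 1 2 \<noteq> 0" "C x 2 1 \<noteq> 0" using False z12 z21 by auto
    then have a: "C x 1 2 < 0" and b: "C x 2 1 < 0" using c12 c21 by auto
    have "C x 1 2 * C x 2 1 > 0" using a b by (simp add: mult_neg_neg)
    then have "C x 1 2 * C x 2 1 \<ge> 4" using False by auto
    then have "infinite U" using infin a b by blast
    then show ?thesis using finiff False by simp
  qed
qed

end
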